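(* Let $\mathcal V$ be a finite set of nodes, $\mathcal P$ a finite set of labels, $\mathcal E$ a set of unordered pairs of nodes, $\theta_{ip}\in\mathbb R$, and $\theta_{ij,pq}\le0$ for all $\{i,j\}\in\mathcal E$, $p,q\in\mathcal P$. Let $w^m_{ip},c^m\in\mathbb R$ ($m=1,\dots,M$) and $v^k_{ip},d^k\in\mathbb R$ ($k=1,\dots,K$). For $\vec y\in\{0,1\}^{\mathcal V\times\mathcal P}$, $\vec\lambda\in\mathbb R^{\mathcal V}$, $\vec\xi\in\mathbb R^M$, $\vec\pi\in\mathbb R^K$ let $$L(\vec y,\vec\lambda,\vec\xi,\vec\pi)=E_I(\vec y)+\sum_{i}\lambda_i\Big(\sum_p y_{ip}-1\Big)+\sum_{m=1}^M\xi_m\Big(\sum_{i,p}w^m_{ip}y_{ip}-c^m\Big)+\sum_{k=1}^K\pi_k\Big(\sum_{i,p}v^k_{ip}y_{ip}-d^k\Big),$$ where $E_I(\vec y)=\sum_{i,p}\theta_{ip}y_{ip}+\sum_{\{i,j\}\in\mathcal E}\sum_{p,q}\theta_{ij,pq}y_{ip}y_{jq}$, and $D(\vec\lambda,\vec\xi,\vec\pi)=\min_{\vec y\in\{0,1\}^{\mathcal V\times\mathcal P}}L(\vec y,\vec\lambda,\vec\xi,\vec\pi)$. Then the maximum of $D(\vec\lambda,\vec\xi,\vec\pi)$ over $\vec\lambda\in\mathbb R^{\mathcal V}$, $\vec\xi\in\mathbb R^M$, $\vec\pi\in\mathbb R^K$ with $\pi_k\ge0$ for all $k$ equals the optimal value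 of the linear program $$\min_{\vec y}\ \sum_{i,p}\theta_{ip}y_{ip}+\sum_{\{i,j\}\in\mathcal E}\sum_{p,q}\theta_{ij,pq}y_{ij,pq}$$ subject to $y_{ip}\in[0,1]$; $y_{ij,pq}\in[0,1]$; $y_{ij,pq}\le y_{ip}$, $y_{ij,pq}\le y_{jq}$ for all $\{i,j\}\in\mathcal E$, $p,q\in\mathcal P$; $\sum_p y_{ip}=1$ for all $i\in\mathcal V$; $\sum_{i,p}w^m_{ip}y_{ip}=c^m$ for $m=1,\dots,M$; and $\sum_{i,p}v^k_{ip}y_{ip}\le d^k$ for $k=1,\dots,K$.
   Context: This is pairwise energy minimization $E(\vec x)=\sum_i\theta_i(x_i)+\sum_{\{i,j\}}\theta_{ij}(x_i,x_j)$ in indicator variables $y_{ip}=[x_i=p]$, subject additionally to global linear equality and inequality constraints on the indicators; all these constraints together with the consistency constraints are relaxed by Lagrange multipliers ($\vec\pi\ge0$ for inequalities). *)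

theory Defs
  imports "HOL-Analysis.Analysis"
begin

text \<open>Unordered edges {i,j} are represented as ordered pairs (i,j), each edge
  stored in exactly one orientation; theta2 i j p q is the pairwise cost of
  labelling i with p and j with q.\<close>

definition valid_edges :: "'v set \<Rightarrow> ('v \<times> 'v) set \<Rightarrow> bool" where
  "valid_edges V E \<longleftrightarrow> E \<subseteq> V \<times> V \<and> (\<forall>(i,j)\<in>E. i \<noteq> j \<and> (j,i) \<notin> E)"

definition energy_I ::
  "'v set \<Rightarrow> 'p set \<Rightarrow> ('v \<times> 'v) set \<Rightarrow> ('v \<Rightarrow> 'p \<Rightarrow> real)
   \<Rightarrow> ('v \<Rightarrow> 'v \<Rightarrow> 'p \<Rightarrow> 'p \<Rightarrow> real) \<Rightarrow> ('v \<Rightarrow> 'p \<Rightarrow> real) \<Rightarrow> real" where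
  "energy_I V P E theta1 theta2 y =
     (\<Sum>i\<in>V. \<Sum>p\<in>P. theta1 i p * y i p)
   + (\<Sum>(i,j)\<in>E. \<Sum>p\<in>P. \<Sum>q\<in>P. theta2 i j p q * y i p * y j q)"

definition lagrangian ::
  "'v set \<Rightarrow> 'p set \<Rightarrow> ('v \<times> 'v) set \<Rightarrow> ('v \<Rightarrow> 'p \<Rightarrow> real)
   \<Rightarrow> ('v \<Rightarrow> 'v \<Rightarrow> 'p \<Rightarrow> 'p \<Rightarrow> real)
   \<Rightarrow> nat \<Rightarrow> (nat \<Rightarrow> 'v \<Rightarrow> 'p \<Rightarrow> real) \<Rightarrow> (nat \<Rightarrow> real)
   \<Rightarrow> nat \<Rightarrow> (nat \<Rightarrow> 'v \<Rightarrow> 'p \<Rightarrow> real) \<Rightarrow> (nat \<Rightarrow> real)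
   \<Rightarrow> ('v \<Rightarrow> 'p \<Rightarrow> real) \<Rightarrow> ('v \<Rightarrow> real) \<Rightarrow> (nat \<Rightarrow> real) \<Rightarrow> (nat \<Rightarrow> real) \<Rightarrow> real" where
  "lagrangian V P E theta1 theta2 M w c K v d y lam xi mu =
     energy_I V P E theta1 theta2 y
   + (\<Sum>i\<in>V. lam i * ((\<Sum>p\<in>P. y i p) - 1))
   + (\<Sum>m\<in>{1..M}. xi m * ((\<Sum>i\<in>V. \<Sum>p\<in>P. w m i p * y i p) - c m))
   + (\<Sum>k\<in>{1..K}. mu k * ((\<Sum>i\<in>V. \<Sum>p\<in>P. v k i p * y i p) - d k))"

definition binary_labellings :: "'v set \<Rightarrow> 'p set \<Rightarrow> ('v \<Rightarrow> 'p \<Rightarrow> real) set" where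
  "binary_labellings V P =
     {y. (\<forall>i\<in>V. \<forall>p\<in>P. y i p \<in> {0,1}) \<and> (\<forall>i p. (i \<notin> V \<or> p \<notin> P) \<longrightarrow> y i p = 0)}"

definition dual_fun ::
  "'v set \<Rightarrow> 'p set \<Rightarrow> ('v \<times> 'v) set \<Rightarrow> ('v \<Rightarrow> 'p \<Rightarrow> real)
   \<Rightarrow> ('v \<Rightarrow> 'v \<Rightarrow> 'p \<Rightarrow> 'p \<Rightarrow> real)
   \<Rightarrow> nat \<Rightarrow> (nat \<Rightarrow> 'v \<Rightarrow> 'p \<Rightarrow> real) \<Rightarrow> (nat \<Rightarrow> real)
   \<Rightarrow> nat \<Rightarrow> (nat \<Rightarrow> 'v \<Rightarrow> 'p \<Rightarrow> real) \<Rightarrow> (nat \<Rightarrow> real)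
   \<Rightarrow> ('v \<Rightarrow> real) \<Rightarrow> (nat \<Rightarrow> real) \<Rightarrow> (nat \<Rightarrow> real) \<Rightarrow> real" where
  "dual_fun V P E theta1 theta2 M w c K v d lam xi mu =
     Min ((\<lambda>y. lagrangian V P E theta1 theta2 M w c K v d y lam xi mu) ` binary_labellings V P)"

definition lp_feasible ::
  "'v set \<Rightarrow> 'p set \<Rightarrow> ('v \<times> 'v) set
   \<Rightarrow> nat \<Rightarrow> (nat \<Rightarrow> 'v \<Rightarrow> 'p \<Rightarrow> real) \<Rightarrow> (nat \<Rightarrow> real)
   \<Rightarrow> nat \<Rightarrow> (nat \<Rightarrow> 'v \<Rightarrow> 'p \<Rightarrow> real) \<Rightarrow> (nat \<Rightarrow> real)
   \<Rightarrow> (('v \<Rightarrow> 'p \<Rightarrow> real) \<times> ('v \<Rightarrow> 'v \<Rightarrow> 'p \<Rightarrow> 'p \<Rightarrow> real)) set" where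
  "lp_feasible V P E M w c K v d =
     {(y1, y2).
        (\<forall>i\<in>V. \<forall>p\<in>P. 0 \<le> y1 i p \<and> y1 i p \<le> 1)
      \<and> (\<forall>(i,j)\<in>E. \<forall>p\<in>P. \<forall>q\<in>P. 0 \<le> y2 i j p q \<and> y2 i j p q \<le> 1
                  \<and> y2 i j p q \<le> y1 i p \<and> y2 i j p q \<le> y1 j q)
      \<and> (\<forall>i\<in>V. (\<Sum>p\<in>P. y1 i p) = 1)
      \<and> (\<forall>m\<in>{1..M}. (\<Sum>i\<in>V. \<Sum>p\<in>P. w m i p * y1 i p) = c m)
      \<and> (\<forall>k\<in>{1..K}. (\<Sum>i\<in>V. \<Sum>p\<in>P. v k i p * y1 i p) \<le> d k)}"

definition lp_objective ::
  "'v set \<Rightarrow> 'p set \<Rightarrow> ('v \<times> 'v) set \<Rightarrow> ('v \<Rightarrow> 'p \<Rightarrow> real)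
   \<Rightarrow> ('v \<Rightarrow> 'v \<Rightarrow> 'p \<Rightarrow> 'p \<Rightarrow> real)
   \<Rightarrow> ('v \<Rightarrow> 'p \<Rightarrow> real) \<Rightarrow> ('v \<Rightarrow> 'v \<Rightarrow> 'p \<Rightarrow> 'p \<Rightarrow> real) \<Rightarrow> real" where
  "lp_objective V P E theta1 theta2 y1 y2 =
     (\<Sum>i\<in>V. \<Sum>p\<in>P. theta1 i p * y1 i p)
   + (\<Sum>(i,j)\<in>E. \<Sum>p\<in>P. \<Sum>q\<in>P. theta2 i j p q * y2 i j p q)"

end

theory Submission
  imports Defs
begin


lemma sum_delta_mult:
  assumes "finite C" "c0 \<in> C"
  shows "(\<Sum>c\<in>C. (if c = c0 then a else 0) * g c) = (a::real) * g c0"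
proof -
  have "(\<Sum>c\<in>C. (if c = c0 then a else 0) * g c) = (\<Sum>c\<in>C. if c = c0 then a * g c else 0)"
    by (rule sum.cong) auto
  then show ?thesis using assms by simp
qed

lemma farkas_set:
  fixes J :: "'j set" and C :: "(('j \<Rightarrow> real) \<times> real) set"
  assumes "finite J" "finite C"
    and nosol: "\<not> (\<exists>x. \<forall>c\<in>C. (\<Sum>j\<in>J. fst c j * x j) \<le> snd c)"
  shows "\<exists>y. (\<forall>c\<in>C. 0 \<le> y c) \<and> (\<forall>j\<in>J. (\<Sum>c\<in>C. y c * fst c j) = 0)
             \<and> (\<Sum>c\<in>C. y c * snd c) < 0"
  using assms
proof (induction J arbitrary: C rule: finite_induct)
  case empty
  then obtain c0 where c0: "c0 \<in> C" "snd c0 < 0" by force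
  let ?y = "\<lambda>c. if c = c0 then 1 else (0::real)"
  have "(\<Sum>c\<in>C. ?y c * snd c) = snd c0"
    using empty c0 sum_delta_mult[of C c0 1 snd] by simp
  then show ?case using c0 by (intro exI[of _ ?y]) auto
next
  case (insert j0 J' C)
  define Pp where "Pp = {c\<in>C. fst c j0 > 0}"
  define Nn where "Nn = {c\<in>C. fst c j0 < 0}"
  define Z where "Z = {c\<in>C. fst c j0 = 0}"
  define comb where "comb = (\<lambda>(p::('j \<Rightarrow> real) \<times> real, n::('j \<Rightarrow> real) \<times> real).
     ((\<lambda>j. (- fst n j0) * fst p j + fst p j0 * fst n j), (- fst n j0) * snd p + fst p j0 * snd n))"
  define C' where "C' = Z \<union> comb ` (Pp \<times> Nn)"
  have finC': "finite C'" using insert.prems(1) unfolding C'_def Z_def Pp_def Nn_def by auto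
  have C'0: "fst c' j0 = 0" if "c' \<in> C'" for c'
    using that unfolding C'_def Z_def comb_def by auto
  show ?case
  proof (rule ccontr)
    assume nocert: "\<not> ?case"
    have "\<exists>x. \<forall>c\<in>C'. (\<Sum>j\<in>J'. fst c j * x j) \<le> snd c"
    proof (rule ccontr)
      assume "\<not> ?thesis"
      from insert.IH[OF finC' this] obtain y' where
        y'1: "\<forall>c\<in>C'. 0 \<le> y' c" and y'2: "\<forall>j\<in>J'. (\<Sum>c\<in>C'. y' c * fst c j) = 0"
        and y'3: "(\<Sum>c\<in>C'. y' c * snd c) < 0" by blast
      have "\<forall>c'\<in>C'. \<exists>z. (\<forall>c\<in>C. 0 \<le> z c) \<and> (\<forall>j. fst c' j = (\<Sum>c\<in>C. z c * fst c j))
                \<and> snd c' = (\<Sum>c\<in>C. z c * snd c)"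
      proof
        fix c' assume "c' \<in> C'"
        then consider "c' \<in> Z" | p n where "p \<in> Pp" "n \<in> Nn" "c' = comb (p, n)"
          unfolding C'_def by auto
        then show "\<exists>z. (\<forall>c\<in>C. 0 \<le> z c) \<and> (\<forall>j. fst c' j = (\<Sum>c\<in>C. z c * fst c j))
                \<and> snd c' = (\<Sum>c\<in>C. z c * snd c)"
        proof cases
          case 1
          then have "c' \<in> C" unfolding Z_def by auto
          then show ?thesis using insert.prems(1) sum_delta_mult[of C c' 1]
            by (intro exI[of _ "\<lambda>c. if c = c' then 1 else 0"]) simp
        next
          case 2
          have pn: "p \<in> C" "n \<in> C" "p \<noteq> n" "fst p j0 > 0" "fst n j0 < 0"
            using 2 unfolding Pp_def Nn_def by auto
          let ?z = "\<lambda>c. if c = p then - fst n j0 else if c = n then fst p j0 else 0"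
          have s: "(\<Sum>c\<in>C. ?z c * g c) = (- fst n j0) * g p + fst p j0 * g n" for g :: "_ \<Rightarrow> real"
          proof -
            have "(\<Sum>c\<in>C. ?z c * g c) = (\<Sum>c\<in>C. (if c = p then - fst n j0 * g p else 0)
                     + (if c = n then fst p j0 * g n else 0))"
              by (rule sum.cong) (use pn in auto)
            also have "\<dots> = (- fst n j0) * g p + fst p j0 * g n"
              using pn insert.prems(1) by (simp add: sum.distrib sum.delta)
            finally show ?thesis .
          qed
          show ?thesis
            apply (rule exI[of _ ?z])
            using pn 2 s[of "\<lambda>c. snd c"] s[of "\<lambda>c. fst c _"]
            by (auto simp: comb_def)
        qed
      qed
      then obtain z where zz: "\<forall>c'\<in>C'. (\<forall>c\<in>C. 0 \<le> z c' c) \<and> (\<forall>j. fst c' j = (\<Sum>c\<in>C. z c' c * fst c j))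
                \<and> snd c' = (\<Sum>c\<in>C. z c' c * snd c)"
        by (rule bchoice[THEN exE]) blast
      have z: "(\<forall>c\<in>C. 0 \<le> z c' c) \<and> (\<forall>j. fst c' j = (\<Sum>c\<in>C. z c' c * fst c j))
                \<and> snd c' = (\<Sum>c\<in>C. z c' c * snd c)" if "c' \<in> C'" for c'
        using zz that by blast
      define y where "y = (\<lambda>c. \<Sum>c'\<in>C'. y' c' * z c' c)"
      have tr: "(\<Sum>c\<in>C. y c * g c) = (\<Sum>c'\<in>C'. y' c' * (\<Sum>c\<in>C. z c' c * g c))" for g
        unfolding y_def by (simp add: sum_distrib_left sum_distrib_right sum.swap[of _ C] mult.assoc)
      have "(\<forall>c\<in>C. 0 \<le> y c) \<and> (\<forall>j\<in>insert j0 J'. (\<Sum>c\<in>C. y c * fst c j) = 0)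
             \<and> (\<Sum>c\<in>C. y c * snd c) < 0"
      proof (intro conjI ballI)
        fix c assume "c \<in> C"
        then show "0 \<le> y c" unfolding y_def using y'1 z by (auto intro!: sum_nonneg)
      next
        fix j assume j: "j \<in> insert j0 J'"
        have "(\<Sum>c\<in>C. y c * fst c j) = (\<Sum>c'\<in>C'. y' c' * fst c' j)"
          unfolding tr[of "\<lambda>c. fst c j"] using z by (intro sum.cong) auto
        also have "\<dots> = 0"
          using j y'2 C'0 by (cases "j = j0") (auto intro!: sum.neutral)
        finally show "(\<Sum>c\<in>C. y c * fst c j) = 0" .
      next
        have "(\<Sum>c\<in>C. y c * snd c) = (\<Sum>c'\<in>C'. y' c' * snd c')"
          unfolding tr[of "\<lambda>c. snd c"] using z by (intro sum.cong) auto
        then show "(\<Sum>c\<in>C. y c * snd c) < 0" using y'3 by simp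
      qed
      then show False using nocert by blast
    qed
    then obtain x' where x': "\<forall>c\<in>C'. (\<Sum>j\<in>J'. fst c j * x' j) \<le> snd c" by blast
    define s where "s = (\<lambda>c::('j \<Rightarrow> real) \<times> real. \<Sum>j\<in>J'. fst c j * x' j)"
    define u where "u = (\<lambda>c::('j \<Rightarrow> real) \<times> real. (snd c - s c) / fst c j0)"
    have finPN: "finite Pp" "finite Nn" using insert.prems(1) unfolding Pp_def Nn_def by auto
    have key: "u n \<le> u p" if "p \<in> Pp" "n \<in> Nn" for p n
    proof -
      have pn: "fst p j0 > 0" "fst n j0 < 0" using that unfolding Pp_def Nn_def by auto
      have "comb (p, n) \<in> C'" using that unfolding C'_def by auto
      then have "(\<Sum>j\<in>J'. fst (comb (p,n)) j * x' j) \<le> snd (comb (p,n))" using x' by blast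
      moreover have "(\<Sum>j\<in>J'. fst (comb (p,n)) j * x' j) = (- fst n j0) * s p + fst p j0 * s n"
      proof -
        have "(\<Sum>j\<in>J'. fst (comb (p,n)) j * x' j) = (\<Sum>j\<in>J'. (- fst n j0) * (fst p j * x' j) + fst p j0 * (fst n j * x' j))"
          by (simp add: comb_def algebra_simps)
        also have "\<dots> = (- fst n j0) * s p + fst p j0 * s n"
          by (simp only: sum.distrib sum_distrib_left[symmetric] s_def)
        finally show ?thesis .
      qed
      ultimately have "(- fst n j0) * s p + fst p j0 * s n \<le> (- fst n j0) * snd p + fst p j0 * snd n"
        unfolding comb_def by simp
      then show ?thesis unfolding u_def using pn
        by (simp add: divide_simps) (smt (verit) mult.commute right_diff_distrib)
    qed
    define t where "t = (if Pp \<noteq> {} then Min (u ` Pp) else if Nn \<noteq> {} then Max (u ` Nn) else 0)"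
    have tP: "t \<le> u p" if "p \<in> Pp" for p
    proof -
      have "Pp \<noteq> {}" using that by auto
      then have "t = Min (u ` Pp)" unfolding t_def by simp
      then show ?thesis using that finPN by simp
    qed
    have tN: "u n \<le> t" if "n \<in> Nn" for n
    proof (cases "Pp = {}")
      case True
      then have "t = Max (u ` Nn)" using that unfolding t_def by auto
      then show ?thesis using that finPN by simp
    next
      case False
      then have "t = Min (u ` Pp)" unfolding t_def by simp
      moreover have "u n \<le> Min (u ` Pp)"
        using False finPN key[OF _ that] by (intro Min.boundedI) auto
      ultimately show ?thesis by simp
    qed
    define x where "x = x'(j0 := t)"
    have "\<forall>c\<in>C. (\<Sum>j\<in>insert j0 J'. fst c j * x j) \<le> snd c"
    proof
      fix c assume c: "c \<in> C"
      have e: "(\<Sum>j\<in>insert j0 J'. fst c j * x j) = fst c j0 * t + s c"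
      proof -
        have "(\<Sum>j\<in>insert j0 J'. fst c j * x j) = fst c j0 * x j0 + (\<Sum>j\<in>J'. fst c j * x j)"
          using insert.hyps by (simp add: sum.insert)
        also have "(\<Sum>j\<in>J'. fst c j * x j) = s c"
          unfolding s_def x_def using insert.hyps by (intro sum.cong) auto
        finally show ?thesis unfolding x_def by simp
      qed
      consider "fst c j0 = 0" | "fst c j0 > 0" | "fst c j0 < 0" by linarith
      then show "(\<Sum>j\<in>insert j0 J'. fst c j * x j) \<le> snd c"
      proof cases
        case 1
        then have "c \<in> C'" using c unfolding C'_def Z_def by auto
        then show ?thesis using x' e 1 unfolding s_def by auto
      next
        case 2
        then have "t \<le> u c" using tP c unfolding Pp_def by auto
        then have "fst c j0 * t \<le> snd c - s c" using 2 unfolding u_def by (simp add: le_divide_eq mult.commute)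
        then show ?thesis using e by simp
      next
        case 3
        then have "u c \<le> t" using tN c unfolding Nn_def by auto
        then have "fst c j0 * t \<le> snd c - s c" using 3 unfolding u_def by (simp add: neg_divide_le_eq mult.commute)
        then show ?thesis using e by simp
      qed
    qed
    then show False using insert.prems(2) by blast
  qed
qed



lemma farkas:
  fixes I :: "'i set" and J :: "'j set" and A :: "'i \<Rightarrow> 'j \<Rightarrow> real" and b :: "'i \<Rightarrow> real"
  assumes fI: "finite I" and fJ: "finite J"
    and nosol: "\<not> (\<exists>x. \<forall>i\<in>I. (\<Sum>j\<in>J. A i j * x j) \<le> b i)"
  shows "\<exists>y. (\<forall>i\<in>I. 0 \<le> y i) \<and> (\<forall>j\<in>J. (\<Sum>i\<in>I. y i * A i j) = 0) \<and> (\<Sum>i\<in>I. y i * b i) < 0"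
proof -
  define h where "h = (\<lambda>i. (A i, b i))"
  have "\<not> (\<exists>x. \<forall>c\<in>h ` I. (\<Sum>j\<in>J. fst c j * x j) \<le> snd c)"
    using nosol unfolding h_def by auto
  from farkas_set[OF fJ finite_imageI[OF fI] this] obtain yc where
    yc: "\<forall>c\<in>h ` I. 0 \<le> yc c" "\<forall>j\<in>J. (\<Sum>c\<in>h ` I. yc c * fst c j) = 0" "(\<Sum>c\<in>h ` I. yc c * snd c) < 0"
    by blast
  define cnt where "cnt = (\<lambda>c. real (card {i \<in> I. h i = c}))"
  define y where "y = (\<lambda>i. yc (h i) / cnt (h i))"
  have cntpos: "cnt c > 0" if "c \<in> h ` I" for c
    using that fI unfolding cnt_def by (auto simp: card_gt_0_iff)
  have tr: "(\<Sum>i\<in>I. y i * g (h i)) = (\<Sum>c\<in>h ` I. yc c * g c)" for g :: "_ \<Rightarrow> real"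
  proof -
    have "(\<Sum>i\<in>I. y i * g (h i)) = (\<Sum>c\<in>h ` I. \<Sum>i\<in>{i \<in> I. h i = c}. y i * g (h i))"
      using fI by (rule sum.image_gen)
    also have "\<dots> = (\<Sum>c\<in>h ` I. yc c * g c)"
    proof (rule sum.cong)
      fix c assume c: "c \<in> h ` I"
      have "(\<Sum>i\<in>{i \<in> I. h i = c}. y i * g (h i)) = (\<Sum>i\<in>{i \<in> I. h i = c}. yc c / cnt c * g c)"
        unfolding y_def by (rule sum.cong) auto
      also have "\<dots> = cnt c * (yc c / cnt c * g c)" unfolding cnt_def by simp
      also have "\<dots> = yc c * g c" using cntpos[OF c] by simp
      finally show "(\<Sum>i\<in>{i \<in> I. h i = c}. y i * g (h i)) = yc c * g c" .
    qed simp
    finally show ?thesis .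
  qed
  show ?thesis
  proof (intro exI conjI ballI)
    fix i assume "i \<in> I" then show "0 \<le> y i" unfolding y_def using yc(1) cntpos[of "h i"] by simp
  next
    fix j assume "j \<in> J"
    then show "(\<Sum>i\<in>I. y i * A i j) = 0" using tr[of "\<lambda>c. fst c j"] yc(2) unfolding h_def by simp
  next
    show "(\<Sum>i\<in>I. y i * b i) < 0" using tr[of "\<lambda>c. snd c"] yc(3) unfolding h_def by simp
  qed
qed

lemma farkas_eq:
  fixes I :: "'i set" and Ie :: "'e set" and J :: "'j set"
    and A :: "'i \<Rightarrow> 'j \<Rightarrow> real" and b :: "'i \<Rightarrow> real"
    and Ae :: "'e \<Rightarrow> 'j \<Rightarrow> real" and be :: "'e \<Rightarrow> real"
  assumes fI: "finite I" and fIe: "finite Ie" and fJ: "finite J"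
    and nosol: "\<not> (\<exists>x. (\<forall>i\<in>I. (\<Sum>j\<in>J. A i j * x j) \<le> b i) \<and> (\<forall>i\<in>Ie. (\<Sum>j\<in>J. Ae i j * x j) = be i))"
  shows "\<exists>y ye. (\<forall>i\<in>I. 0 \<le> y i) \<and> (\<forall>j\<in>J. (\<Sum>i\<in>I. y i * A i j) + (\<Sum>i\<in>Ie. ye i * Ae i j) = 0)
          \<and> (\<Sum>i\<in>I. y i * b i) + (\<Sum>i\<in>Ie. ye i * be i) < 0"
proof -
  define A' where "A' = (\<lambda>r j. case r of Inl i \<Rightarrow> A i j | Inr (i, s) \<Rightarrow> (if s then Ae i j else - Ae i j))"
  define b' where "b' = (\<lambda>r. case r of Inl i \<Rightarrow> b i | Inr (i, s) \<Rightarrow> (if s then be i else - be i))"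
  define I' where "I' = I <+> (Ie \<times> (UNIV :: bool set))"
  have fI': "finite I'" unfolding I'_def using fI fIe by auto
  have sp: "(\<Sum>r\<in>I'. F r) = (\<Sum>i\<in>I. F (Inl i)) + (\<Sum>i\<in>Ie. F (Inr (i, True)) + F (Inr (i, False)))" for F :: "_ \<Rightarrow> real"
  proof -
    have "(\<Sum>r\<in>I'. F r) = (\<Sum>i\<in>I. F (Inl i)) + (\<Sum>p\<in>Ie \<times> (UNIV :: bool set). F (Inr p))"
      unfolding I'_def using fI fIe by (simp add: sum.Plus comp_def)
    also have "(\<Sum>p\<in>Ie \<times> (UNIV :: bool set). F (Inr p)) = (\<Sum>i\<in>Ie. \<Sum>s\<in>(UNIV :: bool set). F (Inr (i, s)))"
      by (simp add: sum.cartesian_product)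
    also have "\<dots> = (\<Sum>i\<in>Ie. F (Inr (i, True)) + F (Inr (i, False)))"
      by (simp add: UNIV_bool add.commute)
    finally show ?thesis .
  qed
  have "\<not> (\<exists>x. \<forall>r\<in>I'. (\<Sum>j\<in>J. A' r j * x j) \<le> b' r)"
  proof
    assume "\<exists>x. \<forall>r\<in>I'. (\<Sum>j\<in>J. A' r j * x j) \<le> b' r"
    then obtain x where x: "\<forall>r\<in>I'. (\<Sum>j\<in>J. A' r j * x j) \<le> b' r" by blast
    have "(\<forall>i\<in>I. (\<Sum>j\<in>J. A i j * x j) \<le> b i) \<and> (\<forall>i\<in>Ie. (\<Sum>j\<in>J. Ae i j * x j) = be i)"
    proof (intro conjI ballI)
      fix i assume "i \<in> I" then have "Inl i \<in> I'" unfolding I'_def by auto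
      from bspec[OF x this] show "(\<Sum>j\<in>J. A i j * x j) \<le> b i" by (simp add: A'_def b'_def)
    next
      fix i assume i: "i \<in> Ie"
      have "Inr (i, True) \<in> I'" "Inr (i, False) \<in> I'" using i unfolding I'_def by auto
      from bspec[OF x this(1)] have "(\<Sum>j\<in>J. Ae i j * x j) \<le> be i" by (simp add: A'_def b'_def)
      moreover from bspec[OF x \<open>Inr (i, False) \<in> I'\<close>] have "(\<Sum>j\<in>J. - Ae i j * x j) \<le> - be i"
        by (simp add: A'_def b'_def)
      then have "- (\<Sum>j\<in>J. Ae i j * x j) \<le> - be i" by (simp add: sum_negf)
      ultimately show "(\<Sum>j\<in>J. Ae i j * x j) = be i" by linarith
    qed
    then show False using nosol by blast
  qed
  from farkas[OF fI' fJ this] obtain y' where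
    y': "\<forall>r\<in>I'. 0 \<le> y' r" "\<forall>j\<in>J. (\<Sum>r\<in>I'. y' r * A' r j) = 0" "(\<Sum>r\<in>I'. y' r * b' r) < 0"
    by blast
  show ?thesis
  proof (intro exI conjI ballI)
    fix i assume "i \<in> I" then show "0 \<le> y' (Inl i)" using y'(1) unfolding I'_def by auto
  next
    fix j assume j: "j \<in> J"
    show "(\<Sum>i\<in>I. y' (Inl i) * A i j) + (\<Sum>i\<in>Ie. (y' (Inr (i, True)) - y' (Inr (i, False))) * Ae i j) = 0"
      using y'(2) j unfolding sp by (simp add: A'_def algebra_simps)
  next
    show "(\<Sum>i\<in>I. y' (Inl i) * b i) + (\<Sum>i\<in>Ie. (y' (Inr (i, True)) - y' (Inr (i, False))) * be i) < 0"
      using y'(3) unfolding sp by (simp add: b'_def algebra_simps)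
  qed
qed



lemma sum_swap_mult:
  "(\<Sum>y\<in>Y. (a y::real) * (\<Sum>k\<in>K. b k * c k y)) = (\<Sum>k\<in>K. b k * (\<Sum>y\<in>Y. a y * c k y))"
  by (simp add: sum_distrib_left mult_ac sum.swap[of _ K])

definition Lag :: "'e set \<Rightarrow> 'k set \<Rightarrow> ('y \<Rightarrow> real) \<Rightarrow> ('e \<Rightarrow> 'y \<Rightarrow> real) \<Rightarrow> ('k \<Rightarrow> 'y \<Rightarrow> real)
   \<Rightarrow> ('e \<Rightarrow> real) \<Rightarrow> ('k \<Rightarrow> real) \<Rightarrow> 'y \<Rightarrow> real" where
  "Lag Eq Kq f G R lam mu y = f y + (\<Sum>e\<in>Eq. lam e * G e y) + (\<Sum>k\<in>Kq. mu k * R k y)"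

definition pfeas :: "'y set \<Rightarrow> 'e set \<Rightarrow> 'k set \<Rightarrow> ('e \<Rightarrow> 'y \<Rightarrow> real) \<Rightarrow> ('k \<Rightarrow> 'y \<Rightarrow> real)
   \<Rightarrow> ('y \<Rightarrow> real) \<Rightarrow> bool" where
  "pfeas Y Eq Kq G R \<alpha> \<longleftrightarrow> (\<forall>y\<in>Y. 0 \<le> \<alpha> y) \<and> sum \<alpha> Y = 1
     \<and> (\<forall>e\<in>Eq. (\<Sum>y\<in>Y. \<alpha> y * G e y) = 0) \<and> (\<forall>k\<in>Kq. (\<Sum>y\<in>Y. \<alpha> y * R k y) \<le> 0)"

lemma dual_unbounded:
  fixes Y :: "'y set" and Eq :: "'e set" and Kq :: "'k set"
  assumes fY: "finite Y" and fE: "finite Eq" and fK: "finite Kq"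
    and nf: "\<not> (\<exists>\<alpha>. pfeas Y Eq Kq G R \<alpha>)"
  shows "\<exists>lam mu. (\<forall>k\<in>Kq. 0 \<le> mu k) \<and> (\<forall>y\<in>Y. \<gamma> \<le> Lag Eq Kq f G R lam mu y)"
proof (rule ccontr)
  assume nsol: "\<not> ?thesis"
  define J where "J = (Eq <+> Kq) <+> {()}"
  define I where "I = Y <+> (Kq <+> {()})"
  define A :: "'y + 'k + unit \<Rightarrow> ('e + 'k) + unit \<Rightarrow> real" where
    "A = (\<lambda>r j. case r of
        Inl y \<Rightarrow> (case j of Inl (Inl e) \<Rightarrow> - G e y | Inl (Inr k) \<Rightarrow> - R k y | Inr _ \<Rightarrow> 1)
      | Inr (Inl k) \<Rightarrow> (case j of Inl (Inr k') \<Rightarrow> (if k = k' then -1 else 0) | _ \<Rightarrow> 0)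
      | Inr (Inr _) \<Rightarrow> (case j of Inr _ \<Rightarrow> -1 | _ \<Rightarrow> 0))"
  define b :: "'y + 'k + unit \<Rightarrow> real" where
    "b = (\<lambda>r. case r of Inl y \<Rightarrow> f y | Inr (Inl k) \<Rightarrow> 0 | Inr (Inr _) \<Rightarrow> - \<gamma>)"
  have fJ: "finite J" and fI: "finite I" unfolding J_def I_def using fY fE fK by auto
  have sJ: "(\<Sum>j\<in>J. F j) = (\<Sum>e\<in>Eq. F (Inl (Inl e))) + (\<Sum>k\<in>Kq. F (Inl (Inr k))) + F (Inr ())"
    for F :: "_ \<Rightarrow> real"
    unfolding J_def using fE fK by (simp add: sum.Plus comp_def)
  have sI: "(\<Sum>r\<in>I. F r) = (\<Sum>y\<in>Y. F (Inl y)) + (\<Sum>k\<in>Kq. F (Inr (Inl k))) + F (Inr (Inr ()))"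
    for F :: "_ \<Rightarrow> real"
    unfolding I_def using fY fK by (simp add: sum.Plus comp_def)
  have "\<not> (\<exists>x. \<forall>r\<in>I. (\<Sum>j\<in>J. A r j * x j) \<le> b r)"
  proof
    assume "\<exists>x. \<forall>r\<in>I. (\<Sum>j\<in>J. A r j * x j) \<le> b r"
    then obtain x where x: "\<And>r. r \<in> I \<Longrightarrow> (\<Sum>j\<in>J. A r j * x j) \<le> b r" by blast
    define lam where "lam = (\<lambda>e. x (Inl (Inl e)))"
    define mu where "mu = (\<lambda>k. x (Inl (Inr k)))"
    have mu: "0 \<le> mu k" if k: "k \<in> Kq" for k
    proof -
      have "Inr (Inl k) \<in> I" using k unfolding I_def by auto
      from x[OF this] have "(\<Sum>k'\<in>Kq. (if k = k' then -1 else 0) * x (Inl (Inr k'))) \<le> 0"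
        unfolding sJ by (simp add: A_def b_def)
      also have "(\<Sum>k'\<in>Kq. (if k = k' then -1 else 0) * x (Inl (Inr k'))) = - x (Inl (Inr k))"
        using sum_delta_mult[OF fK k, of "-1" "\<lambda>k'. x (Inl (Inr k'))"] by (simp add: eq_commute)
      finally show ?thesis unfolding mu_def by simp
    qed
    have t: "\<gamma> \<le> x (Inr ())"
    proof -
      have "Inr (Inr ()) \<in> I" unfolding I_def by auto
      from x[OF this] show ?thesis unfolding sJ by (simp add: A_def b_def)
    qed
    have "\<forall>y\<in>Y. \<gamma> \<le> Lag Eq Kq f G R lam mu y"
    proof
      fix y assume y: "y \<in> Y"
      then have "Inl y \<in> I" unfolding I_def by auto
      from x[OF this] have "(\<Sum>e\<in>Eq. - G e y * lam e) + (\<Sum>k\<in>Kq. - R k y * mu k) + x (Inr ()) \<le> f y"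
        unfolding sJ by (simp add: A_def b_def lam_def mu_def)
      then show "\<gamma> \<le> Lag Eq Kq f G R lam mu y"
        using t unfolding Lag_def by (simp add: sum_negf mult.commute)
    qed
    then show False using nsol mu by blast
  qed
  from farkas[OF fI fJ this] obtain u where
    u: "\<forall>r\<in>I. 0 \<le> u r" "\<forall>j\<in>J. (\<Sum>r\<in>I. u r * A r j) = 0" "(\<Sum>r\<in>I. u r * b r) < 0"
    by blast
  have upos: "0 \<le> u (Inl y)" if "y \<in> Y" for y using u(1) that unfolding I_def by auto
  have "Inr () \<in> J" unfolding J_def by auto
  from bspec[OF u(2) this] have eqt: "(\<Sum>y\<in>Y. u (Inl y)) - u (Inr (Inr ())) = 0"
    unfolding sI by (simp add: A_def)
  have eqe: "(\<Sum>y\<in>Y. u (Inl y) * G e y) = 0" if "e \<in> Eq" for e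
  proof -
    have "Inl (Inl e) \<in> J" using that unfolding J_def by auto
    from bspec[OF u(2) this] have "(\<Sum>y\<in>Y. u (Inl y) * - G e y) = 0"
      unfolding sI by (simp add: A_def)
    then show ?thesis by (simp add: sum_negf)
  qed
  have eqk: "(\<Sum>y\<in>Y. u (Inl y) * R k y) \<le> 0" if k: "k \<in> Kq" for k
  proof -
    have "Inl (Inr k) \<in> J" using that unfolding J_def by auto
    from bspec[OF u(2) this] have "(\<Sum>y\<in>Y. u (Inl y) * - R k y) + (\<Sum>k'\<in>Kq. u (Inr (Inl k')) * (if k' = k then -1 else 0)) = 0"
      unfolding sI by (simp add: A_def)
    moreover have "(\<Sum>k'\<in>Kq. u (Inr (Inl k')) * (if k' = k then -1 else 0)) = - u (Inr (Inl k))"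
      using sum_delta_mult[OF fK k, of "-1" "\<lambda>k'. u (Inr (Inl k'))"] by (simp add: mult.commute)
    moreover have "0 \<le> u (Inr (Inl k))" using u(1) k unfolding I_def by auto
    ultimately show ?thesis by (simp add: sum_negf)
  qed
  have rhs: "(\<Sum>y\<in>Y. u (Inl y) * f y) - u (Inr (Inr ())) * \<gamma> < 0"
    using u(3) unfolding sI by (simp add: b_def)
  define \<delta> where "\<delta> = u (Inr (Inr ()))"
  show False
  proof (cases "\<delta> = 0")
    case True
    then have "(\<Sum>y\<in>Y. u (Inl y)) = 0" using eqt unfolding \<delta>_def by simp
    then have "\<forall>y\<in>Y. u (Inl y) = 0" using sum_nonneg_eq_0_iff[OF fY, of "\<lambda>y. u (Inl y)"] upos by simp
    then show False using rhs True unfolding \<delta>_def by simp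
  next
    case False
    have "Inr (Inr ()) \<in> I" unfolding I_def by auto
    then have dpos: "\<delta> > 0" using False bspec[OF u(1)] unfolding \<delta>_def by force
    define \<alpha> where "\<alpha> = (\<lambda>y. u (Inl y) / \<delta>)"
    have "pfeas Y Eq Kq G R \<alpha>"
      unfolding pfeas_def
    proof (intro conjI ballI)
      fix y assume "y \<in> Y" then show "0 \<le> \<alpha> y" using upos dpos unfolding \<alpha>_def by simp
    next
      show "sum \<alpha> Y = 1" using eqt dpos unfolding \<alpha>_def \<delta>_def by (simp add: sum_divide_distrib[symmetric])
    next
      fix e assume "e \<in> Eq" then show "(\<Sum>y\<in>Y. \<alpha> y * G e y) = 0"
        using eqe unfolding \<alpha>_def by (simp add: sum_divide_distrib[symmetric])
    next
      fix k assume "k \<in> Kq" then show "(\<Sum>y\<in>Y. \<alpha> y * R k y) \<le> 0"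
        using eqk dpos unfolding \<alpha>_def by (simp add: sum_divide_distrib[symmetric] divide_nonpos_pos)
    qed
    then show False using nf by blast
  qed
qed



lemma lin5:
  "(\<Sum>y\<in>Y. (U y::real) * (a * f y - n y + s1 y + c + s2 y)) = a * (\<Sum>y\<in>Y. U y * f y) - (\<Sum>y\<in>Y. U y * n y)
     + (\<Sum>y\<in>Y. U y * s1 y) + c * sum U Y + (\<Sum>y\<in>Y. U y * s2 y)"
proof -
  have "(\<Sum>y\<in>Y. (U y::real) * (a * f y - n y + s1 y + c + s2 y))
     = (\<Sum>y\<in>Y. a * (U y * f y) - U y * n y + U y * s1 y + c * U y + U y * s2 y)"
    by (rule sum.cong) (simp_all add: algebra_simps)
  also have "\<dots> = a * (\<Sum>y\<in>Y. U y * f y) - (\<Sum>y\<in>Y. U y * n y)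
     + (\<Sum>y\<in>Y. U y * s1 y) + c * sum U Y + (\<Sum>y\<in>Y. U y * s2 y)"
    by (simp only: sum.distrib sum_subtractf sum_distrib_left[symmetric])
  finally show ?thesis .
qed

lemma dual_attain:
  fixes Y :: "'y set" and Eq :: "'e set" and Kq :: "'k set"
  assumes fY: "finite Y" and fE: "finite Eq" and fK: "finite Kq"
    and feas: "pfeas Y Eq Kq G R \<alpha>0"
  shows "\<exists>lam mu \<alpha>. (\<forall>k\<in>Kq. 0 \<le> mu k) \<and> pfeas Y Eq Kq G R \<alpha>
           \<and> (\<forall>y\<in>Y. (\<Sum>y'\<in>Y. \<alpha> y' * f y') \<le> Lag Eq Kq f G R lam mu y)"
proof (rule ccontr)
  assume nsol: "\<not> ?thesis"
  define J where "J = (Eq <+> Kq) <+> Y"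
  define I where "I = Y <+> (Kq <+> (Y <+> Kq))"
  define Ie where "Ie = {()} <+> Eq"
  define A :: "'y + 'k + 'y + 'k \<Rightarrow> ('e + 'k) + 'y \<Rightarrow> real" where
    "A = (\<lambda>r j. case r of
        Inl y \<Rightarrow> (case j of Inl (Inl e) \<Rightarrow> - G e y | Inl (Inr k) \<Rightarrow> - R k y | Inr y' \<Rightarrow> f y')
      | Inr (Inl k) \<Rightarrow> (case j of Inl (Inr k') \<Rightarrow> (if k = k' then -1 else 0) | _ \<Rightarrow> 0)
      | Inr (Inr (Inl y)) \<Rightarrow> (case j of Inr y' \<Rightarrow> (if y = y' then -1 else 0) | _ \<Rightarrow> 0)
      | Inr (Inr (Inr k)) \<Rightarrow> (case j of Inr y' \<Rightarrow> R k y' | _ \<Rightarrow> 0))"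
  define b :: "'y + 'k + 'y + 'k \<Rightarrow> real" where
    "b = (\<lambda>r. case r of Inl y \<Rightarrow> f y | _ \<Rightarrow> 0)"
  define Ae :: "unit + 'e \<Rightarrow> ('e + 'k) + 'y \<Rightarrow> real" where
    "Ae = (\<lambda>r j. case r of
        Inl _ \<Rightarrow> (case j of Inr y' \<Rightarrow> 1 | _ \<Rightarrow> 0)
      | Inr e \<Rightarrow> (case j of Inr y' \<Rightarrow> G e y' | _ \<Rightarrow> 0))"
  define be :: "unit + 'e \<Rightarrow> real" where
    "be = (\<lambda>r. case r of Inl _ \<Rightarrow> 1 | Inr _ \<Rightarrow> 0)"
  have fJ: "finite J" and fI: "finite I" and fIe: "finite Ie"
    unfolding J_def I_def Ie_def using fY fE fK by auto
  have sJ: "(\<Sum>j\<in>J. F j) = (\<Sum>e\<in>Eq. F (Inl (Inl e))) + (\<Sum>k\<in>Kq. F (Inl (Inr k))) + (\<Sum>y\<in>Y. F (Inr y))"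
    for F :: "_ \<Rightarrow> real"
    unfolding J_def using fE fK fY by (simp add: sum.Plus comp_def)
  have sI: "(\<Sum>r\<in>I. F r) = (\<Sum>y\<in>Y. F (Inl y)) + (\<Sum>k\<in>Kq. F (Inr (Inl k)))
      + (\<Sum>y\<in>Y. F (Inr (Inr (Inl y)))) + (\<Sum>k\<in>Kq. F (Inr (Inr (Inr k))))"
    for F :: "_ \<Rightarrow> real"
    unfolding I_def using fY fK by (simp add: sum.Plus comp_def add.assoc)
  have sIe: "(\<Sum>r\<in>Ie. F r) = F (Inl ()) + (\<Sum>e\<in>Eq. F (Inr e))"
    for F :: "_ \<Rightarrow> real"
    unfolding Ie_def using fE by (simp add: sum.Plus comp_def)
  have "\<not> (\<exists>x. (\<forall>r\<in>I. (\<Sum>j\<in>J. A r j * x j) \<le> b r) \<and> (\<forall>r\<in>Ie. (\<Sum>j\<in>J. Ae r j * x j) = be r))"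
  proof
    assume "\<exists>x. (\<forall>r\<in>I. (\<Sum>j\<in>J. A r j * x j) \<le> b r) \<and> (\<forall>r\<in>Ie. (\<Sum>j\<in>J. Ae r j * x j) = be r)"
    then obtain x where x: "\<And>r. r \<in> I \<Longrightarrow> (\<Sum>j\<in>J. A r j * x j) \<le> b r"
      and xe: "\<And>r. r \<in> Ie \<Longrightarrow> (\<Sum>j\<in>J. Ae r j * x j) = be r" by blast
    define lam where "lam = (\<lambda>e. x (Inl (Inl e)))"
    define mu where "mu = (\<lambda>k. x (Inl (Inr k)))"
    define \<alpha> where "\<alpha> = (\<lambda>y. x (Inr y))"
    have mu: "0 \<le> mu k" if k: "k \<in> Kq" for k
    proof -
      have "Inr (Inl k) \<in> I" using k unfolding I_def by auto
      from x[OF this] have "(\<Sum>k'\<in>Kq. (if k = k' then -1 else 0) * x (Inl (Inr k'))) \<le> 0"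
        unfolding sJ by (simp add: A_def b_def)
      also have "(\<Sum>k'\<in>Kq. (if k = k' then -1 else 0) * x (Inl (Inr k'))) = - x (Inl (Inr k))"
        using sum_delta_mult[OF fK k, of "-1" "\<lambda>k'. x (Inl (Inr k'))"] by (simp add: eq_commute)
      finally show ?thesis unfolding mu_def by simp
    qed
    have pf: "pfeas Y Eq Kq G R \<alpha>"
      unfolding pfeas_def
    proof (intro conjI ballI)
      fix y assume y: "y \<in> Y"
      have "Inr (Inr (Inl y)) \<in> I" using y unfolding I_def by auto
      from x[OF this] have "(\<Sum>y'\<in>Y. (if y = y' then -1 else 0) * x (Inr y')) \<le> 0"
        unfolding sJ by (simp add: A_def b_def)
      also have "(\<Sum>y'\<in>Y. (if y = y' then -1 else 0) * x (Inr y')) = - x (Inr y)"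
        using sum_delta_mult[OF fY y, of "-1" "\<lambda>y'. x (Inr y')"] by (simp add: eq_commute)
      finally show "0 \<le> \<alpha> y" unfolding \<alpha>_def by simp
    next
      have "Inl () \<in> Ie" unfolding Ie_def by auto
      from xe[OF this] show "sum \<alpha> Y = 1" unfolding sJ \<alpha>_def by (simp add: Ae_def be_def)
    next
      fix e assume e: "e \<in> Eq"
      then have "Inr e \<in> Ie" unfolding Ie_def by auto
      from xe[OF this] show "(\<Sum>y\<in>Y. \<alpha> y * G e y) = 0" unfolding sJ \<alpha>_def
        by (simp add: Ae_def be_def mult.commute)
    next
      fix k assume k: "k \<in> Kq"
      then have "Inr (Inr (Inr k)) \<in> I" unfolding I_def by auto
      from x[OF this] show "(\<Sum>y\<in>Y. \<alpha> y * R k y) \<le> 0" unfolding sJ \<alpha>_def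
        by (simp add: A_def b_def mult.commute)
    qed
    have "\<forall>y\<in>Y. (\<Sum>y'\<in>Y. \<alpha> y' * f y') \<le> Lag Eq Kq f G R lam mu y"
    proof
      fix y assume y: "y \<in> Y"
      then have "Inl y \<in> I" unfolding I_def by auto
      from x[OF this] have "(\<Sum>e\<in>Eq. - G e y * lam e) + (\<Sum>k\<in>Kq. - R k y * mu k) + (\<Sum>y'\<in>Y. f y' * \<alpha> y') \<le> f y"
        unfolding sJ by (simp add: A_def b_def lam_def mu_def \<alpha>_def)
      then show "(\<Sum>y'\<in>Y. \<alpha> y' * f y') \<le> Lag Eq Kq f G R lam mu y"
        unfolding Lag_def by (simp add: sum_negf mult.commute)
    qed
    then show False using nsol mu pf by blast
  qed
  from farkas_eq[OF fI fIe fJ this] obtain u ue where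
    u: "\<forall>r\<in>I. 0 \<le> u r" "\<forall>j\<in>J. (\<Sum>r\<in>I. u r * A r j) + (\<Sum>r\<in>Ie. ue r * Ae r j) = 0"
       "(\<Sum>r\<in>I. u r * b r) + (\<Sum>r\<in>Ie. ue r * be r) < 0"
    by blast
  define U where "U = (\<lambda>y. u (Inl y))"
  define \<beta> where "\<beta> = (\<lambda>k. u (Inr (Inl k)))"
  define \<nu> where "\<nu> = (\<lambda>y. u (Inr (Inr (Inl y))))"
  define \<kappa> where "\<kappa> = (\<lambda>k. u (Inr (Inr (Inr k))))"
  define \<sigma> where "\<sigma> = ue (Inl ())"
  define \<rho> where "\<rho> = (\<lambda>e. ue (Inr e))"
  have Upos: "0 \<le> U y" and \<nu>pos: "0 \<le> \<nu> y" if "y \<in> Y" for y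
    using u(1) that unfolding I_def U_def \<nu>_def by auto
  have \<beta>pos: "0 \<le> \<beta> k" and \<kappa>pos: "0 \<le> \<kappa> k" if "k \<in> Kq" for k
    using u(1) that unfolding I_def \<beta>_def \<kappa>_def by auto
  have eqe: "(\<Sum>y\<in>Y. U y * G e y) = 0" if "e \<in> Eq" for e
  proof -
    have "Inl (Inl e) \<in> J" using that unfolding J_def by auto
    from bspec[OF u(2) this] have "(\<Sum>y\<in>Y. U y * - G e y) = 0"
      unfolding sI sIe by (simp add: A_def Ae_def U_def)
    then show ?thesis by (simp add: sum_negf)
  qed
  have eqk: "(\<Sum>y\<in>Y. U y * R k y) = - \<beta> k" if k: "k \<in> Kq" for k
  proof -
    have "Inl (Inr k) \<in> J" using that unfolding J_def by auto
    from bspec[OF u(2) this] have "(\<Sum>y\<in>Y. U y * - R k y) + (\<Sum>k'\<in>Kq. \<beta> k' * (if k' = k then -1 else 0)) = 0"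
      unfolding sI sIe by (simp add: A_def Ae_def U_def \<beta>_def)
    moreover have "(\<Sum>k'\<in>Kq. \<beta> k' * (if k' = k then -1 else 0)) = - \<beta> k"
      using sum_delta_mult[OF fK k, of "-1" \<beta>] by (simp add: mult.commute)
    ultimately show ?thesis by (simp add: sum_negf)
  qed
  have eqy: "sum U Y * f y' - \<nu> y' + (\<Sum>k\<in>Kq. \<kappa> k * R k y') + \<sigma> + (\<Sum>e\<in>Eq. \<rho> e * G e y') = 0"
    if y': "y' \<in> Y" for y'
  proof -
    have "Inr y' \<in> J" using that unfolding J_def by auto
    from bspec[OF u(2) this] have "(\<Sum>y\<in>Y. U y * f y') + (\<Sum>y\<in>Y. \<nu> y * (if y = y' then -1 else 0))
         + (\<Sum>k\<in>Kq. \<kappa> k * R k y') + (\<sigma> + (\<Sum>e\<in>Eq. \<rho> e * G e y')) = 0"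
      unfolding sI sIe by (simp add: A_def Ae_def U_def \<nu>_def \<kappa>_def \<sigma>_def \<rho>_def)
    moreover have "(\<Sum>y\<in>Y. \<nu> y * (if y = y' then -1 else 0)) = - \<nu> y'"
      using sum_delta_mult[OF fY y', of "-1" \<nu>] by (simp add: mult.commute)
    ultimately show ?thesis by (simp add: sum_distrib_right[symmetric] add.assoc)
  qed
  have rhs: "(\<Sum>y\<in>Y. U y * f y) + \<sigma> < 0"
    using u(3) unfolding sI sIe by (simp add: b_def be_def U_def \<sigma>_def)
  have eq1: "(\<Sum>y'\<in>Y. U y' * (sum U Y * f y' - \<nu> y' + (\<Sum>k\<in>Kq. \<kappa> k * R k y') + \<sigma> + (\<Sum>e\<in>Eq. \<rho> e * G e y'))) = 0"
  proof (rule sum.neutral, rule ballI)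
    fix y' assume "y' \<in> Y"
    show "U y' * (sum U Y * f y' - \<nu> y' + (\<Sum>k\<in>Kq. \<kappa> k * R k y') + \<sigma> + (\<Sum>e\<in>Eq. \<rho> e * G e y')) = 0"
      by (simp only: eqy[OF \<open>y' \<in> Y\<close>] mult_zero_right)
  qed
  have eq2: "(\<Sum>y'\<in>Y. U y' * (sum U Y * f y' - \<nu> y' + (\<Sum>k\<in>Kq. \<kappa> k * R k y') + \<sigma> + (\<Sum>e\<in>Eq. \<rho> e * G e y')))
     = sum U Y * (\<Sum>y'\<in>Y. U y' * f y') - (\<Sum>y'\<in>Y. U y' * \<nu> y') + (\<Sum>k\<in>Kq. \<kappa> k * (\<Sum>y\<in>Y. U y * R k y))
        + \<sigma> * sum U Y + (\<Sum>e\<in>Eq. \<rho> e * (\<Sum>y\<in>Y. U y * G e y))"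
    by (simp only: lin5 sum_swap_mult[where a=U and Y=Y and b=\<kappa> and K=Kq and c=R] sum_swap_mult[where a=U and Y=Y and b=\<rho> and K=Eq and c=G])
  have s1: "(\<Sum>k\<in>Kq. \<kappa> k * (\<Sum>y\<in>Y. U y * R k y)) = - (\<Sum>k\<in>Kq. \<kappa> k * \<beta> k)"
  proof -
    have "(\<Sum>k\<in>Kq. \<kappa> k * (\<Sum>y\<in>Y. U y * R k y)) = (\<Sum>k\<in>Kq. - (\<kappa> k * \<beta> k))"
      by (rule sum.cong) (simp_all add: eqk)
    then show ?thesis by (simp add: sum_negf)
  qed
  have s2: "(\<Sum>e\<in>Eq. \<rho> e * (\<Sum>y\<in>Y. U y * G e y)) = 0"
    by (rule sum.neutral) (simp add: eqe)
  have "sum U Y * (\<Sum>y'\<in>Y. U y' * f y') - (\<Sum>y'\<in>Y. U y' * \<nu> y') - (\<Sum>k\<in>Kq. \<kappa> k * \<beta> k) + \<sigma> * sum U Y = 0"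
    using eq1 eq2 s1 s2 by simp
  then have main: "sum U Y * ((\<Sum>y'\<in>Y. U y' * f y') + \<sigma>) = (\<Sum>y'\<in>Y. U y' * \<nu> y') + (\<Sum>k\<in>Kq. \<kappa> k * \<beta> k)"
    by (smt (verit) distrib_left mult.commute)
  have "0 \<le> (\<Sum>y'\<in>Y. U y' * \<nu> y') + (\<Sum>k\<in>Kq. \<kappa> k * \<beta> k)"
    using Upos \<nu>pos \<kappa>pos \<beta>pos by (intro add_nonneg_nonneg sum_nonneg) auto
  with main rhs have "sum U Y \<le> 0" by (smt (verit) mult_pos_neg)
  moreover have "0 \<le> sum U Y" using Upos by (simp add: sum_nonneg)
  ultimately have "sum U Y = 0" by simp
  then have U0: "\<forall>y\<in>Y. U y = 0" using sum_nonneg_eq_0_iff[OF fY, of U] Upos by simp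
  then have sneg: "\<sigma> < 0" using rhs by simp
  have a0: "\<forall>y\<in>Y. 0 \<le> \<alpha>0 y" "sum \<alpha>0 Y = 1" "\<forall>e\<in>Eq. (\<Sum>y\<in>Y. \<alpha>0 y * G e y) = 0"
     "\<forall>k\<in>Kq. (\<Sum>y\<in>Y. \<alpha>0 y * R k y) \<le> 0"
    using feas unfolding pfeas_def by auto
  have nu_eq: "\<nu> y' = (\<Sum>k\<in>Kq. \<kappa> k * R k y') + \<sigma> + (\<Sum>e\<in>Eq. \<rho> e * G e y')" if "y' \<in> Y" for y'
    using eqy[OF that] U0 by simp
  have "(\<Sum>y'\<in>Y. \<alpha>0 y' * \<nu> y') = (\<Sum>y'\<in>Y. \<alpha>0 y' * ((\<Sum>k\<in>Kq. \<kappa> k * R k y') + \<sigma> + (\<Sum>e\<in>Eq. \<rho> e * G e y')))"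
    using nu_eq by simp
  also have "\<dots> = 0 * (\<Sum>y\<in>Y. \<alpha>0 y * 0) - (\<Sum>y\<in>Y. \<alpha>0 y * 0) + (\<Sum>k\<in>Kq. \<kappa> k * (\<Sum>y\<in>Y. \<alpha>0 y * R k y)) + \<sigma> * sum \<alpha>0 Y + (\<Sum>e\<in>Eq. \<rho> e * (\<Sum>y\<in>Y. \<alpha>0 y * G e y))"
    using lin5[of \<alpha>0 0 "\<lambda>_. 0" "\<lambda>_. 0" "\<lambda>y'. \<Sum>k\<in>Kq. \<kappa> k * R k y'" \<sigma> "\<lambda>y'. \<Sum>e\<in>Eq. \<rho> e * G e y'" Y]
    by (simp only: sum_swap_mult[where a=\<alpha>0 and Y=Y and b=\<kappa> and K=Kq and c=R] sum_swap_mult[where a=\<alpha>0 and Y=Y and b=\<rho> and K=Eq and c=G]) simp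
  also have "\<dots> = (\<Sum>k\<in>Kq. \<kappa> k * (\<Sum>y\<in>Y. \<alpha>0 y * R k y)) + \<sigma>"
    using a0 by simp
  also have "\<dots> < 0"
  proof -
    have "(\<Sum>k\<in>Kq. \<kappa> k * (\<Sum>y\<in>Y. \<alpha>0 y * R k y)) \<le> 0"
      using a0(4) \<kappa>pos by (intro sum_nonpos) (simp add: mult_nonneg_nonpos)
    then show ?thesis using sneg by simp
  qed
  finally have "(\<Sum>y'\<in>Y. \<alpha>0 y' * \<nu> y') < 0" .
  moreover have "0 \<le> (\<Sum>y'\<in>Y. \<alpha>0 y' * \<nu> y')" using a0(1) \<nu>pos by (intro sum_nonneg) auto
  ultimately show False by simp
qed



lemma step_int:
  fixes a :: real
  assumes "0 \<le> a" "a \<le> 1"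
  shows "((\<lambda>t. if t < a then 1 else 0::real) has_integral a) {0..1}"
proof -
  have i0: "((\<lambda>t. 1::real) has_integral a) {0..a}"
    using has_integral_const_real[of "1::real" 0 a] assms by simp
  have i1: "((\<lambda>t. if t < a then 1 else 0::real) has_integral a) {0..a}"
    by (rule has_integral_spike[OF negligible_sing[of a] _ i0]) auto
  have i2: "((\<lambda>t. if t < a then 1 else 0::real) has_integral 0) {a..1}"
    by (rule has_integral_spike[OF negligible_empty _ has_integral_0]) auto
  from has_integral_combine[OF assms i1 i2] show ?thesis by simp
qed

lemma const_int: "((\<lambda>t::real. c::real) has_integral c) {0..1}"
  using has_integral_const_real[of c 0 1] by simp

definition LZ :: "'v set \<Rightarrow> 'p set \<Rightarrow> ('v \<times> 'v) set \<Rightarrow> ('v \<Rightarrow> 'p \<Rightarrow> real)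
   \<Rightarrow> ('v \<Rightarrow> 'v \<Rightarrow> 'p \<Rightarrow> 'p \<Rightarrow> real) \<Rightarrow> nat \<Rightarrow> (nat \<Rightarrow> 'v \<Rightarrow> 'p \<Rightarrow> real) \<Rightarrow> (nat \<Rightarrow> real)
   \<Rightarrow> nat \<Rightarrow> (nat \<Rightarrow> 'v \<Rightarrow> 'p \<Rightarrow> real) \<Rightarrow> (nat \<Rightarrow> real) \<Rightarrow> ('v \<Rightarrow> real) \<Rightarrow> (nat \<Rightarrow> real) \<Rightarrow> (nat \<Rightarrow> real)
   \<Rightarrow> ('v \<Rightarrow> 'p \<Rightarrow> real) \<Rightarrow> ('v \<Rightarrow> 'v \<Rightarrow> 'p \<Rightarrow> 'p \<Rightarrow> real) \<Rightarrow> real" where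
  "LZ V P E theta1 theta2 M w c K v d lam xi mu y z =
     (\<Sum>i\<in>V. \<Sum>p\<in>P. theta1 i p * (y i p :: real))
   + (\<Sum>e\<in>E. \<Sum>p\<in>P. \<Sum>q\<in>P. theta2 (fst e) (snd e) p q * z (fst e) (snd e) p q)
   + (\<Sum>i\<in>V. lam i * ((\<Sum>p\<in>P. y i p) - 1))
   + (\<Sum>m\<in>{1..M}. xi m * ((\<Sum>i\<in>V. \<Sum>p\<in>P. w m i p * y i p) - c m))
   + (\<Sum>k\<in>{1..K}. mu k * ((\<Sum>i\<in>V. \<Sum>p\<in>P. v k i p * y i p) - d k))"

lemma lag_LZ:
  "lagrangian V P E theta1 theta2 M w c K v d y lam xi mu
   = LZ V P E theta1 theta2 M w c K v d lam xi mu y (\<lambda>i j p q. y i p * y j q)"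
  unfolding lagrangian_def LZ_def energy_I_def by (simp add: split_def mult.assoc)

lemma LZ_int:
  fixes Ys :: "real \<Rightarrow> 'v \<Rightarrow> 'p \<Rightarrow> real" and Zs :: "real \<Rightarrow> 'v \<Rightarrow> 'v \<Rightarrow> 'p \<Rightarrow> 'p \<Rightarrow> real"
  assumes fV: "finite V" and fP: "finite P" and fE: "finite E"
    and iy: "\<And>i p. i \<in> V \<Longrightarrow> p \<in> P \<Longrightarrow> ((\<lambda>t. Ys t i p) has_integral ya i p) {0..1}"
    and iz: "\<And>e p q. e \<in> E \<Longrightarrow> p \<in> P \<Longrightarrow> q \<in> P \<Longrightarrow>
               ((\<lambda>t. Zs t (fst e) (snd e) p q) has_integral za (fst e) (snd e) p q) {0..1}"
  shows "((\<lambda>t. LZ V P E theta1 theta2 M w c K v d lam xi mu (Ys t) (Zs t))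
          has_integral LZ V P E theta1 theta2 M w c K v d lam xi mu ya za) {0..1}"
  unfolding LZ_def
  by (intro has_integral_add has_integral_diff has_integral_sum has_integral_mult_right
        const_int iy iz fV fP fE finite_atLeastAtMost)
    (auto intro!: has_integral_mult_right has_integral_diff has_integral_sum const_int iy iz fV fP)



lemma bin_val: "y \<in> binary_labellings V P \<Longrightarrow> y i p = 0 \<or> y i p = 1"
  unfolding binary_labellings_def by (cases "i \<in> V \<and> p \<in> P") auto

lemma zero_bin: "(\<lambda>i p. 0) \<in> binary_labellings V P"
  unfolding binary_labellings_def by auto

lemma finite_bin:
  assumes "finite V" "finite P"
  shows "finite (binary_labellings V P)"
proof -
  have "binary_labellings V P \<subseteq> (\<lambda>S. \<lambda>i p. if (i, p) \<in> S then 1 else 0) ` Pow (V \<times> P)"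
  proof
    fix y assume y: "y \<in> binary_labellings V P"
    let ?S = "{(i, p). i \<in> V \<and> p \<in> P \<and> y i p = 1}"
    have "y = (\<lambda>i p. if (i, p) \<in> ?S then 1 else 0)"
    proof (intro ext)
      fix i p show "y i p = (if (i, p) \<in> ?S then 1 else 0)"
        using y bin_val[OF y, of i p] unfolding binary_labellings_def by auto
    qed
    moreover have "?S \<in> Pow (V \<times> P)" by auto
    ultimately show "y \<in> (\<lambda>S. \<lambda>i p. if (i, p) \<in> S then 1 else 0) ` Pow (V \<times> P)" by blast
  qed
  moreover have "finite (Pow (V \<times> P))" using assms by simp
  ultimately show ?thesis by (meson finite_imageI finite_subset)
qed

lemma dual_le:
  assumes "finite V" "finite P" "y \<in> binary_labellings V P"
  shows "dual_fun V P E theta1 theta2 M w c K v d lam xi mu \<le> lagrangian V P E theta1 theta2 M w c K v d y lam xi mu"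
  unfolding dual_fun_def using assms finite_bin[OF assms(1,2)] by (intro Min_le) auto

lemma dual_ge_iff:
  assumes "finite V" "finite P"
  shows "\<gamma> \<le> dual_fun V P E theta1 theta2 M w c K v d lam xi mu \<longleftrightarrow>
     (\<forall>y\<in>binary_labellings V P. \<gamma> \<le> lagrangian V P E theta1 theta2 M w c K v d y lam xi mu)"
  unfolding dual_fun_def using finite_bin[OF assms] zero_bin by (subst Min_ge_iff) auto

lemma weak_duality:
  fixes V :: "'v set" and P :: "'p set" and E :: "('v \<times> 'v) set"
  assumes fV: "finite V" and fP: "finite P" and ve: "valid_edges V E"
    and th2: "\<And>i j p q. (i,j) \<in> E \<Longrightarrow> p \<in> P \<Longrightarrow> q \<in> P \<Longrightarrow> theta2 i j p q \<le> 0"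
    and feas: "(y1, y2) \<in> lp_feasible V P E M w c K v d"
    and mu: "\<forall>k\<in>{1..K}. 0 \<le> mu k"
  shows "dual_fun V P E theta1 theta2 M w c K v d lam xi mu \<le> lp_objective V P E theta1 theta2 y1 y2"
proof -
  have EV: "E \<subseteq> V \<times> V" using ve unfolding valid_edges_def by auto
  have fE: "finite E" using finite_subset[OF EV] fV by auto
  have f1: "\<And>i p. i \<in> V \<Longrightarrow> p \<in> P \<Longrightarrow> 0 \<le> y1 i p \<and> y1 i p \<le> 1"
   and f2: "\<And>i j p q. (i,j) \<in> E \<Longrightarrow> p \<in> P \<Longrightarrow> q \<in> P \<Longrightarrow> y2 i j p q \<le> y1 i p \<and> y2 i j p q \<le> y1 j q"
   and f3: "\<And>i. i \<in> V \<Longrightarrow> (\<Sum>p\<in>P. y1 i p) = 1"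
   and f4: "\<And>m. m \<in> {1..M} \<Longrightarrow> (\<Sum>i\<in>V. \<Sum>p\<in>P. w m i p * y1 i p) = c m"
   and f5: "\<And>k. k \<in> {1..K} \<Longrightarrow> (\<Sum>i\<in>V. \<Sum>p\<in>P. v k i p * y1 i p) \<le> d k"
  proof -
    have F: "(\<forall>i\<in>V. \<forall>p\<in>P. 0 \<le> y1 i p \<and> y1 i p \<le> 1)
      \<and> (\<forall>(i,j)\<in>E. \<forall>p\<in>P. \<forall>q\<in>P. 0 \<le> y2 i j p q \<and> y2 i j p q \<le> 1
                  \<and> y2 i j p q \<le> y1 i p \<and> y2 i j p q \<le> y1 j q)
      \<and> (\<forall>i\<in>V. (\<Sum>p\<in>P. y1 i p) = 1)
      \<and> (\<forall>m\<in>{1..M}. (\<Sum>i\<in>V. \<Sum>p\<in>P. w m i p * y1 i p) = c m)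
      \<and> (\<forall>k\<in>{1..K}. (\<Sum>i\<in>V. \<Sum>p\<in>P. v k i p * y1 i p) \<le> d k)"
      using feas unfolding lp_feasible_def by (simp only: mem_Collect_eq prod.case)
    show "\<And>i p. i \<in> V \<Longrightarrow> p \<in> P \<Longrightarrow> 0 \<le> y1 i p \<and> y1 i p \<le> 1" using F by blast
    show "\<And>i j p q. (i,j) \<in> E \<Longrightarrow> p \<in> P \<Longrightarrow> q \<in> P \<Longrightarrow> y2 i j p q \<le> y1 i p \<and> y2 i j p q \<le> y1 j q"
      using F by fast
    show "\<And>i. i \<in> V \<Longrightarrow> (\<Sum>p\<in>P. y1 i p) = 1" using F by blast
    show "\<And>m. m \<in> {1..M} \<Longrightarrow> (\<Sum>i\<in>V. \<Sum>p\<in>P. w m i p * y1 i p) = c m" using F by blast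
    show "\<And>k. k \<in> {1..K} \<Longrightarrow> (\<Sum>i\<in>V. \<Sum>p\<in>P. v k i p * y1 i p) \<le> d k" using F by blast
  qed
  define Ys where "Ys = (\<lambda>(t::real) i p. if i \<in> V \<and> p \<in> P \<and> t < y1 i p then 1 else (0::real))"
  define Zs where "Zs = (\<lambda>t i j p q. Ys t i p * Ys t j q)"
  define z1 where "z1 = (\<lambda>i j p q. min (y1 i p) (y1 j q))"
  let ?D = "dual_fun V P E theta1 theta2 M w c K v d lam xi mu"
  let ?LZ = "LZ V P E theta1 theta2 M w c K v d lam xi mu"
  have Ybin: "Ys t \<in> binary_labellings V P" for t
    unfolding binary_labellings_def Ys_def by auto
  have iy: "((\<lambda>t. Ys t i p) has_integral y1 i p) {0..1}" if "i \<in> V" "p \<in> P" for i p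
  proof -
    have "(\<lambda>t. Ys t i p) = (\<lambda>t. if t < y1 i p then 1 else 0)"
      using that unfolding Ys_def by auto
    then show ?thesis using step_int f1[OF that] by simp
  qed
  have iz: "((\<lambda>t. Zs t (fst e) (snd e) p q) has_integral z1 (fst e) (snd e) p q) {0..1}"
    if "e \<in> E" "p \<in> P" "q \<in> P" for e p q
  proof -
    have ij: "fst e \<in> V" "snd e \<in> V" using that EV by auto
    have "(\<lambda>t. Zs t (fst e) (snd e) p q) = (\<lambda>t. if t < z1 (fst e) (snd e) p q then 1 else 0)"
      using that ij unfolding Zs_def Ys_def z1_def by auto
    moreover have "0 \<le> z1 (fst e) (snd e) p q" "z1 (fst e) (snd e) p q \<le> 1"
      using f1 ij that unfolding z1_def by (auto simp: min_def)
    ultimately show ?thesis using step_int by simp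
  qed
  have int: "((\<lambda>t. ?LZ (Ys t) (Zs t)) has_integral ?LZ y1 z1) {0..1}"
    by (rule LZ_int[where Ys=Ys and Zs=Zs and ya=y1 and za=z1, OF fV fP fE iy iz])
  have le: "?D \<le> ?LZ (Ys t) (Zs t)" for t
    using dual_le[OF fV fP Ybin[of t]] unfolding lag_LZ Zs_def by simp
  have D1: "?D \<le> ?LZ y1 z1"
    using has_integral_le[OF const_int[of ?D] int] le by simp
  have t3: "(\<Sum>i\<in>V. lam i * ((\<Sum>p\<in>P. y1 i p) - 1)) = 0"
    using f3 by (intro sum.neutral) auto
  have t4: "(\<Sum>m\<in>{1..M}. xi m * ((\<Sum>i\<in>V. \<Sum>p\<in>P. w m i p * y1 i p) - c m)) = 0"
    using f4 by (intro sum.neutral) auto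
  have t5: "(\<Sum>k\<in>{1..K}. mu k * ((\<Sum>i\<in>V. \<Sum>p\<in>P. v k i p * y1 i p) - d k)) \<le> 0"
    using f5 mu by (intro sum_nonpos) (simp add: mult_nonneg_nonpos)
  have t2: "(\<Sum>e\<in>E. \<Sum>p\<in>P. \<Sum>q\<in>P. theta2 (fst e) (snd e) p q * z1 (fst e) (snd e) p q)
      \<le> (\<Sum>e\<in>E. \<Sum>p\<in>P. \<Sum>q\<in>P. theta2 (fst e) (snd e) p q * y2 (fst e) (snd e) p q)"
  proof (intro sum_mono)
    fix e p q assume e: "e \<in> E" and p: "p \<in> P" and q: "q \<in> P"
    obtain i j where eij: "e = (i, j)" by force
    have "y2 i j p q \<le> z1 i j p q" using f2[of i j p q] e p q eij unfolding z1_def by auto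
    moreover have "theta2 i j p q \<le> 0" using th2 e p q eij by auto
    ultimately show "theta2 (fst e) (snd e) p q * z1 (fst e) (snd e) p q
        \<le> theta2 (fst e) (snd e) p q * y2 (fst e) (snd e) p q"
      using eij by (simp add: mult_left_mono_neg)
  qed
  have "?LZ y1 z1 \<le> lp_objective V P E theta1 theta2 y1 y2"
    unfolding LZ_def lp_objective_def using t2 t3 t4 t5 by (simp add: split_def)
  with D1 show ?thesis by simp
qed



lemma swap_alpha:
  "(\<Sum>x\<in>X. (\<Sum>y\<in>Y. (\<alpha> y::real) * h y x)) = (\<Sum>y\<in>Y. \<alpha> y * (\<Sum>x\<in>X. h y x))"
  by (simp add: sum_distrib_left sum.swap[where B=Y])

lemma swap_alpha2:
  "(\<Sum>i\<in>V. \<Sum>p\<in>P. a i p * (\<Sum>y\<in>Y. (\<alpha> y::real) * g y i p)) = (\<Sum>y\<in>Y. \<alpha> y * (\<Sum>i\<in>V. \<Sum>p\<in>P. a i p * g y i p))"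
proof -
  have "(\<Sum>i\<in>V. \<Sum>p\<in>P. a i p * (\<Sum>y\<in>Y. (\<alpha> y::real) * g y i p)) = (\<Sum>i\<in>V. \<Sum>p\<in>P. \<Sum>y\<in>Y. \<alpha> y * (a i p * g y i p))"
    by (simp add: sum_distrib_left mult_ac)
  also have "\<dots> = (\<Sum>y\<in>Y. \<alpha> y * (\<Sum>i\<in>V. \<Sum>p\<in>P. a i p * g y i p))"
    by (simp only: swap_alpha)
  finally show ?thesis .
qed

lemma swap_alpha3:
  "(\<Sum>e\<in>E. \<Sum>p\<in>P. \<Sum>q\<in>Q. a e p q * (\<Sum>y\<in>Y. (\<alpha> y::real) * g y e p q)) = (\<Sum>y\<in>Y. \<alpha> y * (\<Sum>e\<in>E. \<Sum>p\<in>P. \<Sum>q\<in>Q. a e p q * g y e p q))"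
proof -
  have "(\<Sum>e\<in>E. \<Sum>p\<in>P. \<Sum>q\<in>Q. a e p q * (\<Sum>y\<in>Y. (\<alpha> y::real) * g y e p q)) = (\<Sum>e\<in>E. \<Sum>p\<in>P. \<Sum>q\<in>Q. \<Sum>y\<in>Y. \<alpha> y * (a e p q * g y e p q))"
    by (simp add: sum_distrib_left mult_ac)
  also have "\<dots> = (\<Sum>y\<in>Y. \<alpha> y * (\<Sum>e\<in>E. \<Sum>p\<in>P. \<Sum>q\<in>Q. a e p q * g y e p q))"
    by (simp only: swap_alpha)
  finally show ?thesis .
qed

lemma lp_from_alpha:
  fixes V :: "'v set" and P :: "'p set" and E :: "('v \<times> 'v) set"
  assumes fV: "finite V" and fP: "finite P"
    and pf: "pfeas (binary_labellings V P) (V <+> {1..M}) {1..K}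
       (\<lambda>e y. case e of Inl i \<Rightarrow> (\<Sum>p\<in>P. y i p) - 1 | Inr m \<Rightarrow> (\<Sum>i\<in>V. \<Sum>p\<in>P. w m i p * y i p) - c m)
       (\<lambda>k y. (\<Sum>i\<in>V. \<Sum>p\<in>P. v k i p * y i p) - d k) \<alpha>"
  defines "Y \<equiv> binary_labellings V P"
  shows "((\<lambda>i p. \<Sum>y\<in>Y. \<alpha> y * y i p), (\<lambda>i j p q. \<Sum>y\<in>Y. \<alpha> y * (y i p * y j q))) \<in> lp_feasible V P E M w c K v d
    \<and> lp_objective V P E ta tb (\<lambda>i p. \<Sum>y\<in>Y. \<alpha> y * y i p) (\<lambda>i j p q. \<Sum>y\<in>Y. \<alpha> y * (y i p * y j q))
       = (\<Sum>y\<in>Y. \<alpha> y * energy_I V P E ta tb y)"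
proof -
  have a0: "\<And>y. y \<in> Y \<Longrightarrow> 0 \<le> \<alpha> y" and a1: "sum \<alpha> Y = 1"
    and aG: "\<And>e. e \<in> V <+> {1..M} \<Longrightarrow> (\<Sum>y\<in>Y. \<alpha> y * (case e of Inl i \<Rightarrow> (\<Sum>p\<in>P. y i p) - 1 | Inr m \<Rightarrow> (\<Sum>i\<in>V. \<Sum>p\<in>P. w m i p * y i p) - c m)) = 0"
    and aR: "\<And>k. k \<in> {1..K} \<Longrightarrow> (\<Sum>y\<in>Y. \<alpha> y * ((\<Sum>i\<in>V. \<Sum>p\<in>P. v k i p * y i p) - d k)) \<le> 0"
    using pf unfolding pfeas_def Y_def by auto
  have b01: "0 \<le> y i p" "y i p \<le> 1" if "y \<in> Y" for y i p
    using bin_val[of y V P i p] that unfolding Y_def by auto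
  have fY: "finite Y" unfolding Y_def using finite_bin[OF fV fP] .
  define y1 where "y1 = (\<lambda>i p. \<Sum>y\<in>Y. \<alpha> y * y i p)"
  define y2 where "y2 = (\<lambda>i j p q. \<Sum>y\<in>Y. \<alpha> y * (y i p * y j q))"
  have y1b: "0 \<le> y1 i p \<and> y1 i p \<le> 1" for i p
  proof
    show "0 \<le> y1 i p" unfolding y1_def using a0 b01 by (intro sum_nonneg) auto
    have "y1 i p \<le> sum \<alpha> Y" unfolding y1_def using a0 b01
      by (intro sum_mono) (simp add: mult_left_le)
    then show "y1 i p \<le> 1" using a1 by simp
  qed
  have y2b: "0 \<le> y2 i j p q \<and> y2 i j p q \<le> 1 \<and> y2 i j p q \<le> y1 i p \<and> y2 i j p q \<le> y1 j q" for i j p q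
  proof (intro conjI)
    show "0 \<le> y2 i j p q" unfolding y2_def using a0 b01 by (intro sum_nonneg) auto
    show "y2 i j p q \<le> y1 i p" unfolding y2_def y1_def using a0 b01
      by (intro sum_mono mult_left_mono) (auto simp: mult_left_le)
    show "y2 i j p q \<le> y1 j q" unfolding y2_def y1_def using a0 b01
      by (intro sum_mono mult_left_mono) (auto intro: mult_left_le_one_le)
    then show "y2 i j p q \<le> 1" using y1b[of j q] by simp
  qed
  have c3: "(\<Sum>p\<in>P. y1 i p) = 1" if "i \<in> V" for i
  proof -
    have "Inl i \<in> V <+> {1..M}" using that by auto
    from aG[OF this] have "(\<Sum>y\<in>Y. \<alpha> y * ((\<Sum>p\<in>P. y i p) - 1)) = 0" by simp
    then have "(\<Sum>y\<in>Y. \<alpha> y * (\<Sum>p\<in>P. y i p)) = sum \<alpha> Y"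
      by (simp add: right_diff_distrib sum_subtractf)
    then show ?thesis unfolding y1_def swap_alpha using a1 by simp
  qed
  have c4: "(\<Sum>i\<in>V. \<Sum>p\<in>P. w m i p * y1 i p) = c m" if "m \<in> {1..M}" for m
  proof -
    have "Inr m \<in> V <+> {1..M}" using that by auto
    from aG[OF this] have "(\<Sum>y\<in>Y. \<alpha> y * ((\<Sum>i\<in>V. \<Sum>p\<in>P. w m i p * y i p) - c m)) = 0" by simp
    then have "(\<Sum>y\<in>Y. \<alpha> y * (\<Sum>i\<in>V. \<Sum>p\<in>P. w m i p * y i p)) = sum \<alpha> Y * c m"
      by (simp add: right_diff_distrib sum_subtractf sum_distrib_right)
    moreover have "(\<Sum>i\<in>V. \<Sum>p\<in>P. w m i p * y1 i p) = (\<Sum>y\<in>Y. \<alpha> y * (\<Sum>i\<in>V. \<Sum>p\<in>P. w m i p * y i p))"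
      unfolding y1_def by (rule swap_alpha2)
    ultimately show ?thesis using a1 by simp
  qed
  have c5: "(\<Sum>i\<in>V. \<Sum>p\<in>P. v k i p * y1 i p) \<le> d k" if "k \<in> {1..K}" for k
  proof -
    have "(\<Sum>y\<in>Y. \<alpha> y * ((\<Sum>i\<in>V. \<Sum>p\<in>P. v k i p * y i p) - d k)) \<le> 0" using aR that by simp
    then have "(\<Sum>y\<in>Y. \<alpha> y * (\<Sum>i\<in>V. \<Sum>p\<in>P. v k i p * y i p)) \<le> sum \<alpha> Y * d k"
      by (simp add: right_diff_distrib sum_subtractf sum_distrib_right)
    moreover have "(\<Sum>i\<in>V. \<Sum>p\<in>P. v k i p * y1 i p) = (\<Sum>y\<in>Y. \<alpha> y * (\<Sum>i\<in>V. \<Sum>p\<in>P. v k i p * y i p))"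
      unfolding y1_def by (rule swap_alpha2)
    ultimately show ?thesis using a1 by simp
  qed
  have feas: "(y1, y2) \<in> lp_feasible V P E M w c K v d"
    unfolding lp_feasible_def using y1b y2b c3 c4 c5 by auto
  have o1: "(\<Sum>i\<in>V. \<Sum>p\<in>P. ta i p * y1 i p) = (\<Sum>y\<in>Y. \<alpha> y * (\<Sum>i\<in>V. \<Sum>p\<in>P. ta i p * y i p))"
    unfolding y1_def by (rule swap_alpha2)
  have o2: "(\<Sum>e\<in>E. \<Sum>p\<in>P. \<Sum>q\<in>P. tb (fst e) (snd e) p q * y2 (fst e) (snd e) p q)
     = (\<Sum>y\<in>Y. \<alpha> y * (\<Sum>e\<in>E. \<Sum>p\<in>P. \<Sum>q\<in>P. tb (fst e) (snd e) p q * (y (fst e) p * y (snd e) q)))"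
    unfolding y2_def by (rule swap_alpha3)
  have obj: "lp_objective V P E ta tb y1 y2 = (\<Sum>y\<in>Y. \<alpha> y * energy_I V P E ta tb y)"
  proof -
    have "lp_objective V P E ta tb y1 y2 = (\<Sum>i\<in>V. \<Sum>p\<in>P. ta i p * y1 i p)
        + (\<Sum>e\<in>E. \<Sum>p\<in>P. \<Sum>q\<in>P. tb (fst e) (snd e) p q * y2 (fst e) (snd e) p q)"
      unfolding lp_objective_def by (simp only: split_def)
    also have "\<dots> = (\<Sum>y\<in>Y. \<alpha> y * (\<Sum>i\<in>V. \<Sum>p\<in>P. ta i p * y i p))
       + (\<Sum>y\<in>Y. \<alpha> y * (\<Sum>e\<in>E. \<Sum>p\<in>P. \<Sum>q\<in>P. tb (fst e) (snd e) p q * (y (fst e) p * y (snd e) q)))"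
      unfolding o1 o2 ..
    also have "\<dots> = (\<Sum>y\<in>Y. \<alpha> y * ((\<Sum>i\<in>V. \<Sum>p\<in>P. ta i p * y i p)
       + (\<Sum>e\<in>E. \<Sum>p\<in>P. \<Sum>q\<in>P. tb (fst e) (snd e) p q * (y (fst e) p * y (snd e) q))))"
      by (simp only: sum.distrib distrib_left)
    also have "\<dots> = (\<Sum>y\<in>Y. \<alpha> y * energy_I V P E ta tb y)"
      unfolding energy_I_def by (simp only: split_def mult.assoc)
    finally show ?thesis .
  qed
  show ?thesis using feas obj unfolding y1_def y2_def by simp
qed


lemma case_sum_eta: "case_sum (\<lambda>i. l (Inl i)) (\<lambda>m. l (Inr m)) = l"
  by (rule ext) (simp split: sum.split)

theorem theorem7:
  fixes V :: "'v set" and P :: "'p set" and E :: "('v \<times> 'v) set"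
    and theta1 :: "'v \<Rightarrow> 'p \<Rightarrow> real"
    and theta2 :: "'v \<Rightarrow> 'v \<Rightarrow> 'p \<Rightarrow> 'p \<Rightarrow> real"
    and M K :: nat
    and w v :: "nat \<Rightarrow> 'v \<Rightarrow> 'p \<Rightarrow> real" and c d :: "nat \<Rightarrow> real"
  assumes "finite V" and "finite P" and "valid_edges V E"
    and "\<And>i j p q. (i,j) \<in> E \<Longrightarrow> p \<in> P \<Longrightarrow> q \<in> P \<Longrightarrow> theta2 i j p q \<le> 0"
  shows "(SUP (lam, xi, mu) \<in> {(lam, xi, mu). \<forall>k\<in>{1..K}. mu k \<ge> 0}.
            ereal (dual_fun V P E theta1 theta2 M w c K v d lam xi mu))
       = (INF (y1, y2) \<in> lp_feasible V P E M w c K v d.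
            ereal (lp_objective V P E theta1 theta2 y1 y2))
     \<and> (lp_feasible V P E M w c K v d \<noteq> {} \<longrightarrow>
          (\<exists>lam xi mu. (\<forall>k\<in>{1..K}. mu k \<ge> 0) \<and>
             (\<exists>(y1, y2) \<in> lp_feasible V P E M w c K v d.
                dual_fun V P E theta1 theta2 M w c K v d lam xi mu
                = lp_objective V P E theta1 theta2 y1 y2)))"
proof -
  note fV = assms(1) and fP = assms(2) and ve = assms(3) and th2 = assms(4)
  define Y where "Y = binary_labellings V P"
  define Eq :: "('v + nat) set" where "Eq = V <+> {1..M}"
  define Kq where "Kq = {1..K}"
  define G where "G = (\<lambda>e (y::'v \<Rightarrow> 'p \<Rightarrow> real). case e of Inl i \<Rightarrow> (\<Sum>p\<in>P. y i p) - 1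
      | Inr m \<Rightarrow> (\<Sum>i\<in>V. \<Sum>p\<in>P. w m i p * y i p) - c m)"
  define R where "R = (\<lambda>k (y::'v \<Rightarrow> 'p \<Rightarrow> real). (\<Sum>i\<in>V. \<Sum>p\<in>P. v k i p * y i p) - d k)"
  define f where "f = energy_I V P E theta1 theta2"
  let ?D = "\<lambda>lam xi mu. dual_fun V P E theta1 theta2 M w c K v d lam xi mu"
  let ?F = "lp_feasible V P E M w c K v d"
  let ?obj = "\<lambda>y1 y2. lp_objective V P E theta1 theta2 y1 y2"
  let ?S = "{(lam, xi, mu). \<forall>k\<in>{1..K}. mu k \<ge> (0::real)} :: (('v \<Rightarrow> real) \<times> (nat \<Rightarrow> real) \<times> (nat \<Rightarrow> real)) set"
  have fY: "finite Y" unfolding Y_def using finite_bin[OF fV fP] .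
  have fEq: "finite Eq" unfolding Eq_def using fV by simp
  have fK: "finite Kq" unfolding Kq_def by simp
  have lag_eq: "lagrangian V P E theta1 theta2 M w c K v d y (\<lambda>i. l (Inl i)) (\<lambda>m. l (Inr m)) mu
      = Lag Eq Kq f G R l mu y" for y l mu
    unfolding lagrangian_def Lag_def Eq_def Kq_def G_def R_def f_def using fV
    by (simp add: sum.Plus comp_def)
  have Dge: "\<gamma> \<le> ?D (\<lambda>i. l (Inl i)) (\<lambda>m. l (Inr m)) mu" if "\<forall>y\<in>Y. \<gamma> \<le> Lag Eq Kq f G R l mu y" for \<gamma> l mu
    using that unfolding dual_ge_iff[OF fV fP] lag_eq Y_def by blast
  have weak: "?D lam xi mu \<le> ?obj y1 y2" if "(y1, y2) \<in> ?F" "(lam, xi, mu) \<in> ?S" for lam xi mu y1 y2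
    using weak_duality[OF fV fP ve th2 that(1)] that(2) by auto
  have fromA: "\<exists>y1 y2. (y1, y2) \<in> ?F \<and> ?obj y1 y2 = (\<Sum>y\<in>Y. \<alpha> y * f y)"
    if "pfeas Y Eq Kq G R \<alpha>" for \<alpha>
    using lp_from_alpha[OF fV fP _, where M=M and w=w and c=c and K=K and v=v and d=d and \<alpha>=\<alpha> and E=E and ta=theta1 and tb=theta2] that
    unfolding Y_def Eq_def Kq_def G_def R_def f_def by blast
  show ?thesis
  proof (cases "?F = {}")
    case True
    have noA: "\<not> (\<exists>\<alpha>. pfeas Y Eq Kq G R \<alpha>)" using fromA True by blast
    have "(SUP (lam, xi, mu) \<in> ?S. ereal (?D lam xi mu)) = \<infinity>"
    proof (rule ereal_top)
      fix B :: real
      obtain l mu where lm: "\<forall>k\<in>Kq. 0 \<le> mu k" "\<forall>y\<in>Y. B \<le> Lag Eq Kq f G R l mu y"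
        using dual_unbounded[OF fY fEq fK noA, of B f] by blast
      have mem: "((\<lambda>i. l (Inl i)), (\<lambda>m. l (Inr m)), mu) \<in> ?S" using lm(1) unfolding Kq_def by auto
      have "ereal B \<le> ereal (?D (\<lambda>i. l (Inl i)) (\<lambda>m. l (Inr m)) mu)" using Dge[OF lm(2)] by simp
      also have "\<dots> \<le> (SUP (lam, xi, mu) \<in> ?S. ereal (?D lam xi mu))"
        using SUP_upper[OF mem, of "\<lambda>(lam, xi, mu). ereal (?D lam xi mu)"] by simp
      finally show "ereal B \<le> (SUP (lam, xi, mu) \<in> ?S. ereal (?D lam xi mu))" .
    qed
    then show ?thesis using True by (simp add: top_ereal_def)
  next
    case False
    then obtain y1 y2 where f12: "(y1, y2) \<in> ?F" by auto
    have "\<exists>\<alpha>. pfeas Y Eq Kq G R \<alpha>"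
    proof (rule ccontr)
      assume noA: "\<not> ?thesis"
      obtain l mu where lm: "\<forall>k\<in>Kq. 0 \<le> mu k" "\<forall>y\<in>Y. ?obj y1 y2 + 1 \<le> Lag Eq Kq f G R l mu y"
        using dual_unbounded[OF fY fEq fK noA, of "?obj y1 y2 + 1" f] by blast
      have mem: "((\<lambda>i. l (Inl i)), (\<lambda>m. l (Inr m)), mu) \<in> ?S" using lm(1) unfolding Kq_def by auto
      from Dge[OF lm(2)] weak[OF f12 mem] show False by simp
    qed
    then obtain \<alpha>0 where a0: "pfeas Y Eq Kq G R \<alpha>0" by blast
    obtain l mu \<alpha> where la: "\<forall>k\<in>Kq. 0 \<le> mu k" "pfeas Y Eq Kq G R \<alpha>"
        "\<forall>y\<in>Y. (\<Sum>y'\<in>Y. \<alpha> y' * f y') \<le> Lag Eq Kq f G R l mu y"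
      using dual_attain[OF fY fEq fK a0, of f] by blast
    obtain z1 z2 where z: "(z1, z2) \<in> ?F" "?obj z1 z2 = (\<Sum>y\<in>Y. \<alpha> y * f y)"
      using fromA[OF la(2)] by blast
    define lam where "lam = (\<lambda>i. l (Inl i))"
    define xi where "xi = (\<lambda>m. l (Inr m))"
    have mem: "(lam, xi, mu) \<in> ?S" using la(1) unfolding Kq_def by auto
    have Dopt: "?D lam xi mu = ?obj z1 z2"
    proof (rule antisym)
      show "?D lam xi mu \<le> ?obj z1 z2" using weak[OF z(1) mem] .
      show "?obj z1 z2 \<le> ?D lam xi mu" unfolding z(2) lam_def xi_def using Dge[OF la(3)] .
    qed
    have sup: "(SUP (lam, xi, mu) \<in> ?S. ereal (?D lam xi mu)) = ereal (?obj z1 z2)"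
    proof (rule antisym)
      show "(SUP (lam, xi, mu) \<in> ?S. ereal (?D lam xi mu)) \<le> ereal (?obj z1 z2)"
        using weak[OF z(1)] by (intro SUP_least) auto
      show "ereal (?obj z1 z2) \<le> (SUP (lam, xi, mu) \<in> ?S. ereal (?D lam xi mu))"
        using SUP_upper[OF mem, of "\<lambda>(lam, xi, mu). ereal (?D lam xi mu)"] Dopt by simp
    qed
    have inf: "(INF (y1, y2) \<in> ?F. ereal (?obj y1 y2)) = ereal (?obj z1 z2)"
    proof (rule antisym)
      show "(INF (y1, y2) \<in> ?F. ereal (?obj y1 y2)) \<le> ereal (?obj z1 z2)"
        using INF_lower[OF z(1), of "\<lambda>(y1, y2). ereal (?obj y1 y2)"] by simp
      show "ereal (?obj z1 z2) \<le> (INF (y1, y2) \<in> ?F. ereal (?obj y1 y2))"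
        using weak[OF _ mem] Dopt by (intro INF_greatest) auto
    qed
    have ex: "\<exists>(y1, y2) \<in> ?F. ?D lam xi mu = ?obj y1 y2"
      using z(1) Dopt by (intro bexI[of _ "(z1, z2)"]) auto
    have "\<forall>k\<in>{1..K}. mu k \<ge> 0" using mem by auto
    moreover have eq: "(SUP (lam, xi, mu) \<in> ?S. ereal (?D lam xi mu)) = (INF (y1, y2) \<in> ?F. ereal (?obj y1 y2))"
      using sup inf by simp
    ultimately show ?thesis using ex
      by (intro conjI impI exI[of _ lam] exI[of _ xi] exI[of _ mu]) simp_all
  qed
qed


end
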